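(* Let $M\in\mathcal{L}(\ell_2,\ell_1)$ be defined by $(Mx)_k=x_k/k$ for $k\in\mathbb{N}$, let $d\ge0$ be an integer, and let $U\in\mathcal{L}_M$ be a $d$-diagonal operator. Then $\|\{U\}_M\|_{\mathcal{L}(\ell_2)}\le(2d+1)^{3/2}\|U\|_{\mathcal{L}(\ell_1)}$; i.e. $U\in\mathcal{L}_M^C$ with $C=\sqrt{(2d+1)^3}$.
   Context: $\ell_p$ is indexed by $\mathbb{N}$. An operator $U\in\mathcal{L}(\ell_1)$ is identified with its infinite matrix $(u_{nm})$, $(Ux)_n=\sum_m u_{nm}x_m$. $U$ is $d$-diagonal if $u_{nm}=0$ whenever $|n-m|>d$. $\mathcal{L}_M\subset\mathcal{L}(\ell_1)$ is the set of $U$ with $\operatorname{Im}(UM)\subset\operatorname{Im}M$; for $U\in\mathcal{L}_M$, $\{U\}_M:=M^{-1}UM\in\mathcal{L}(\ell_2)$ (matrix entries $\frac{n}{m}u_{nm}$). $\mathcal{L}_M^C$ is the set of $U\in\mathcal{L}_M$ with $\|\{U\}_M\|_{\mathcal{L}(\ell_2)}\le C\|U\|_{\mathcal{L}(\ell_1)}$. *)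

theory Defs
  imports Complex_Main
begin

text \<open>Sequences in l_p are real sequences indexed by nat; the paper's index k \<in> \<nat> = {1,2,...}
  corresponds to the Isabelle index k - 1, so the weight k becomes real (k+1).\<close>

definition in_l1 :: "(nat \<Rightarrow> real) \<Rightarrow> bool" where
  "in_l1 x \<longleftrightarrow> summable (\<lambda>n. \<bar>x n\<bar>)"

definition norm_l1 :: "(nat \<Rightarrow> real) \<Rightarrow> real" where
  "norm_l1 x = (\<Sum>n. \<bar>x n\<bar>)"

definition in_l2 :: "(nat \<Rightarrow> real) \<Rightarrow> bool" where
  "in_l2 x \<longleftrightarrow> summable (\<lambda>n. (x n)\<^sup>2)"

definition norm_l2 :: "(nat \<Rightarrow> real) \<Rightarrow> real" where
  "norm_l2 x = sqrt (\<Sum>n. (x n)\<^sup>2)"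

definition mat_apply :: "(nat \<Rightarrow> nat \<Rightarrow> real) \<Rightarrow> (nat \<Rightarrow> real) \<Rightarrow> nat \<Rightarrow> real" where
  "mat_apply u x = (\<lambda>n. \<Sum>m. u n m * x m)"

definition bounded_op_l1 :: "(nat \<Rightarrow> nat \<Rightarrow> real) \<Rightarrow> bool" where
  "bounded_op_l1 u \<longleftrightarrow>
     (\<forall>x. in_l1 x \<longrightarrow> (\<forall>n. summable (\<lambda>m. u n m * x m)) \<and> in_l1 (mat_apply u x)) \<and>
     (\<exists>C. \<forall>x. in_l1 x \<longrightarrow> norm_l1 (mat_apply u x) \<le> C * norm_l1 x)"

definition opnorm_l1 :: "(nat \<Rightarrow> nat \<Rightarrow> real) \<Rightarrow> real" where
  "opnorm_l1 u = Sup {norm_l1 (mat_apply u x) | x. in_l1 x \<and> norm_l1 x \<le> 1}"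

definition opnorm_l2 :: "((nat \<Rightarrow> real) \<Rightarrow> (nat \<Rightarrow> real)) \<Rightarrow> real" where
  "opnorm_l2 T = Sup {norm_l2 (T x) | x. in_l2 x \<and> norm_l2 x \<le> 1}"

definition opM :: "(nat \<Rightarrow> real) \<Rightarrow> nat \<Rightarrow> real" where
  "opM x = (\<lambda>k. x k / real (k + 1))"

definition opM_inv :: "(nat \<Rightarrow> real) \<Rightarrow> nat \<Rightarrow> real" where
  "opM_inv y = (\<lambda>k. real (k + 1) * y k)"

definition d_diagonal :: "nat \<Rightarrow> (nat \<Rightarrow> nat \<Rightarrow> real) \<Rightarrow> bool" where
  "d_diagonal d u \<longleftrightarrow> (\<forall>n m. d < (if n \<le> m then m - n else n - m) \<longrightarrow> u n m = 0)"

text \<open>L_M: U \<in> L(l_1) with Im(UM) \<subseteq> Im M.\<close>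
definition in_LM :: "(nat \<Rightarrow> nat \<Rightarrow> real) \<Rightarrow> bool" where
  "in_LM u \<longleftrightarrow> bounded_op_l1 u \<and>
     (\<forall>x. in_l2 x \<longrightarrow> (\<exists>y. in_l2 y \<and> mat_apply u (opM x) = opM y))"

definition conjM :: "(nat \<Rightarrow> nat \<Rightarrow> real) \<Rightarrow> (nat \<Rightarrow> real) \<Rightarrow> nat \<Rightarrow> real" where
  "conjM u x = opM_inv (mat_apply u (opM x))"

end

theory Submission
  imports Defs "HOL-Analysis.Analysis"
begin

lemma band_iff: "(m::nat) \<in> {n-d..n+d} \<longleftrightarrow> \<not> d < (if n \<le> m then m - n else n - m)"
  by auto

lemma band_card: "card {(n::nat)-d..n+d} \<le> 2*d+1"
  by simp

lemma opnorm_facts: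
  assumes b: "bounded_op_l1 u"
  shows "\<And>x. in_l1 x \<Longrightarrow> norm_l1 x \<le> 1 \<Longrightarrow> norm_l1 (mat_apply u x) \<le> opnorm_l1 u"
proof -
  fix x assume x: "in_l1 x" "norm_l1 x \<le> 1"
  from b obtain C where C: "\<And>x. in_l1 x \<Longrightarrow> norm_l1 (mat_apply u x) \<le> C * norm_l1 x"
    unfolding bounded_op_l1_def by blast
  have bdd: "bdd_above {norm_l1 (mat_apply u x) | x. in_l1 x \<and> norm_l1 x \<le> 1}"
  proof (rule bdd_aboveI[where M="\<bar>C\<bar>"])
    fix y assume "y \<in> {norm_l1 (mat_apply u x) | x. in_l1 x \<and> norm_l1 x \<le> 1}"
    then obtain z where z: "in_l1 z" "norm_l1 z \<le> 1" "y = norm_l1 (mat_apply u z)" by blast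
    have "0 \<le> norm_l1 z" unfolding norm_l1_def using z(1) in_l1_def
      by (simp add: suminf_nonneg)
    hence "C * norm_l1 z \<le> \<bar>C\<bar>"
      using z(2) by (metis abs_ge_self abs_ge_zero mult_left_le mult_right_mono order_trans)
    thus "y \<le> \<bar>C\<bar>" using C[OF z(1)] z(3) by linarith
  qed
  show "norm_l1 (mat_apply u x) \<le> opnorm_l1 u"
    unfolding opnorm_l1_def by (rule cSup_upper[OF _ bdd]) (use x in blast)
qed

theorem lemma6:
  fixes u :: "nat \<Rightarrow> nat \<Rightarrow> real" and d :: nat
  assumes "in_LM u" and "d_diagonal d u"
  shows "opnorm_l2 (conjM u) \<le> sqrt ((2 * real d + 1) ^ 3) * opnorm_l1 u"
proof -
  define A where "A = opnorm_l1 u"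
  have b: "bounded_op_l1 u" using assms(1) in_LM_def by blast
  have zero: "\<And>n m. \<not> m \<in> {n-d..n+d} \<Longrightarrow> u n m = 0"
    using assms(2) band_iff unfolding d_diagonal_def by blast
  have ent: "\<bar>u n m\<bar> \<le> A" for n m
  proof -
    define e where "e = (\<lambda>k. if k = m then (1::real) else 0)"
    have fe: "\<And>k. \<bar>e k\<bar> = (if k = m then 1 else 0)" unfolding e_def by simp
    have s1: "(\<Sum>k. \<bar>e k\<bar>) = 1"
      by (subst suminf_finite[of "{m}"]) (auto simp: fe)
    have l1: "in_l1 e" unfolding in_l1_def
      by (rule summable_finite[of "{m}"]) (auto simp: fe)
    have ne: "norm_l1 e \<le> 1" using s1 unfolding norm_l1_def by simp
    have ma: "mat_apply u e = (\<lambda>k. u k m)"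
      unfolding mat_apply_def
      by (rule ext, subst suminf_finite[of "{m}"]) (auto simp: e_def)
    have "in_l1 (mat_apply u e)" using b l1 unfolding bounded_op_l1_def by blast
    hence sm: "summable (\<lambda>k. \<bar>u k m\<bar>)" using ma in_l1_def by simp
    have "\<bar>u n m\<bar> \<le> (\<Sum>k. \<bar>u k m\<bar>)"
      using sum_le_suminf[OF sm, of "{n}"] by simp
    also have "\<dots> = norm_l1 (mat_apply u e)" using ma norm_l1_def by simp
    also have "\<dots> \<le> A" unfolding A_def by (rule opnorm_facts[OF b l1 ne])
    finally show ?thesis .
  qed
  have A0: "0 \<le> A" using ent[of 0 0] by linarith
  have col: "(\<Sum>n\<in>{m-d..m+d}. \<bar>u n m\<bar>) \<le> A" for m
  proof -
    define e where "e = (\<lambda>k. if k = m then (1::real) else 0)"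
    have fe: "\<And>k. \<bar>e k\<bar> = (if k = m then 1 else 0)" unfolding e_def by simp
    have s1: "(\<Sum>k. \<bar>e k\<bar>) = 1"
      by (subst suminf_finite[of "{m}"]) (auto simp: fe)
    have l1: "in_l1 e" unfolding in_l1_def
      by (rule summable_finite[of "{m}"]) (auto simp: fe)
    have ne: "norm_l1 e \<le> 1" using s1 unfolding norm_l1_def by simp
    have ma: "mat_apply u e = (\<lambda>k. u k m)"
      unfolding mat_apply_def
      by (rule ext, subst suminf_finite[of "{m}"]) (auto simp: e_def)
    have "in_l1 (mat_apply u e)" using b l1 unfolding bounded_op_l1_def by blast
    hence sm: "summable (\<lambda>k. \<bar>u k m\<bar>)" using ma in_l1_def by simp
    have "(\<Sum>n\<in>{m-d..m+d}. \<bar>u n m\<bar>) \<le> (\<Sum>k. \<bar>u k m\<bar>)"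
      using sum_le_suminf[OF sm] by simp
    also have "\<dots> = norm_l1 (mat_apply u e)" using ma norm_l1_def by simp
    also have "\<dots> \<le> A" unfolding A_def by (rule opnorm_facts[OF b l1 ne])
    finally show ?thesis .
  qed
  define v where "v n m = real (n+1) / real (m+1) * u n m" for n m
  have ratio: "real (n+1) / real (m+1) \<le> real d + 1" if "m \<in> {n-d..n+d}" for n m
  proof -
    have "n \<le> d + m" using that by auto
    hence h1: "real n \<le> real d + real m" by linarith
    have h2: "0 \<le> real d * real m" by simp
    have h3: "real n + 1 \<le> real d * real m + real d + real m + 1" using h1 h2 by linarith
    have "real (n+1) \<le> (real d + 1) * real (m+1)"
      using h3 by (simp add: algebra_simps)
    thus ?thesis by (simp add: divide_le_eq)
  qed
  have vsq: "(v n m)\<^sup>2 \<le> (real d + 1)^2 * A * \<bar>u n m\<bar>" if "m \<in> {n-d..n+d}" for n m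
  proof -
    have r0: "0 \<le> real (n+1) / real (m+1)" by simp
    have "(v n m)\<^sup>2 = (real (n+1) / real (m+1))^2 * (\<bar>u n m\<bar> * \<bar>u n m\<bar>)"
      unfolding v_def by (simp add: power2_eq_square power_mult_distrib)
    also have "\<dots> \<le> (real d + 1)^2 * (A * \<bar>u n m\<bar>)"
      by (intro mult_mono power_mono ratio[OF that] r0 mult_right_mono ent) (auto simp: A0)
    finally show ?thesis by simp
  qed
  have colv: "(\<Sum>n\<in>{m-d..m+d}. (v n m)\<^sup>2) \<le> (real d + 1)^2 * A^2" for m
  proof -
    have "(\<Sum>n\<in>{m-d..m+d}. (v n m)\<^sup>2) \<le> (\<Sum>n\<in>{m-d..m+d}. (real d + 1)^2 * A * \<bar>u n m\<bar>)"
      by (intro sum_mono vsq) auto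
    also have "\<dots> = (real d + 1)^2 * A * (\<Sum>n\<in>{m-d..m+d}. \<bar>u n m\<bar>)"
      by (simp add: sum_distrib_left)
    also have "\<dots> \<le> (real d + 1)^2 * A * A"
      by (intro mult_left_mono col) (auto simp: A0)
    finally show ?thesis by (simp add: power2_eq_square)
  qed
  define B where "B = (2 * real d + 1) * (real d + 1)^2 * A^2"
  have main: "norm_l2 (conjM u x) \<le> sqrt B" if x: "in_l2 x" "norm_l2 x \<le> 1" for x
  proof -
    define y where "y = conjM u x"
    have yn: "y n = (\<Sum>m\<in>{n-d..n+d}. v n m * x m)" for n
    proof -
      have "mat_apply u (opM x) n = (\<Sum>m\<in>{n-d..n+d}. u n m * (x m / real (m+1)))"
        unfolding mat_apply_def opM_def by (rule suminf_finite) (auto simp: zero)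
      thus ?thesis unfolding y_def conjM_def opM_inv_def v_def
        by (simp add: sum_distrib_left mult.assoc)
    qed
    have sx: "summable (\<lambda>m. (x m)\<^sup>2)" using x(1) in_l2_def by simp
    have sx1: "(\<Sum>m. (x m)\<^sup>2) \<le> 1"
    proof -
      have "sqrt (\<Sum>m. (x m)\<^sup>2) \<le> 1" using x(2) norm_l2_def by simp
      thus ?thesis by simp
    qed
    have partial: "(\<Sum>n<N. (y n)\<^sup>2) \<le> B" for N
    proof -
      define g where "g n m = (v n m)\<^sup>2 * (x m)\<^sup>2" for n m
      have "(\<Sum>n<N. (y n)\<^sup>2) \<le> (\<Sum>n<N. (2*real d+1) * (\<Sum>m\<in>{n-d..n+d}. g n m))"
      proof (rule sum_mono)
        fix n
        have "(y n)\<^sup>2 \<le> (\<Sum>m\<in>{n-d..n+d}. (v n m * x m)\<^sup>2) * card {n-d..n+d}"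
          unfolding yn by (rule sum_squared_le_sum_of_squares)
        also have "\<dots> \<le> (\<Sum>m\<in>{n-d..n+d}. g n m) * (2*real d+1)"
        proof -
          have c: "real (card {n-d..n+d}) \<le> 2*real d+1"
            using band_card[of n d] by linarith
          have e: "(\<Sum>m\<in>{n-d..n+d}. (v n m * x m)\<^sup>2) = (\<Sum>m\<in>{n-d..n+d}. g n m)"
            by (simp add: g_def power_mult_distrib)
          show ?thesis unfolding e
            by (intro mult_left_mono c) (auto simp: g_def intro!: sum_nonneg)
        qed
        finally show "(y n)\<^sup>2 \<le> (2*real d+1) * (\<Sum>m\<in>{n-d..n+d}. g n m)" by (simp add: mult.commute)
      qed
      also have "\<dots> = (2*real d+1) * (\<Sum>(n,m)\<in>(SIGMA n:{..<N}. {n-d..n+d}). g n m)"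
        by (simp add: sum_distrib_left sum.Sigma case_prod_beta)
      also have "(\<Sum>(n,m)\<in>(SIGMA n:{..<N}. {n-d..n+d}). g n m)
          \<le> (\<Sum>(n,m)\<in>(\<lambda>(m,n). (n,m)) ` (SIGMA m:{..<N+d}. {m-d..m+d}). g n m)"
        by (rule sum_mono2) (auto simp: g_def image_iff)
      also have "\<dots> = (\<Sum>(m,n)\<in>(SIGMA m:{..<N+d}. {m-d..m+d}). g n m)"
        by (subst sum.reindex) (auto simp: inj_on_def case_prod_beta)
      also have "\<dots> = (\<Sum>m<N+d. (x m)\<^sup>2 * (\<Sum>n\<in>{m-d..m+d}. (v n m)\<^sup>2))"
        by (simp add: sum.Sigma[symmetric] g_def sum_distrib_left mult.commute)
      also have "\<dots> \<le> (\<Sum>m<N+d. (x m)\<^sup>2 * ((real d + 1)^2 * A^2))"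
        by (intro sum_mono mult_left_mono colv) auto
      also have "\<dots> = (\<Sum>m<N+d. (x m)\<^sup>2) * ((real d + 1)^2 * A^2)"
        by (simp add: sum_distrib_right)
      also have "\<dots> \<le> 1 * ((real d + 1)^2 * A^2)"
        using order_trans[OF sum_le_suminf[OF sx, of "{..<N+d}"] sx1]
        by (intro mult_right_mono) auto
      finally show ?thesis unfolding B_def
        by (simp add: mult_left_mono mult.assoc)
    qed
    have sy: "summable (\<lambda>n. (y n)\<^sup>2)"
      by (rule bounded_imp_summable[where B=B]) (use partial[of "Suc _"] in \<open>simp_all add: lessThan_Suc_atMost[symmetric] del: sum.lessThan_Suc\<close>)
    have "(\<Sum>n. (y n)\<^sup>2) \<le> B" by (rule suminf_le_const[OF sy partial])
    thus ?thesis unfolding y_def[symmetric] norm_l2_def by simp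
  qed
  have SB: "sqrt B \<le> sqrt ((2 * real d + 1) ^ 3) * A"
  proof -
    have "B \<le> (2 * real d + 1) ^ 3 * A^2" unfolding B_def
      by (intro mult_right_mono) (auto simp: power3_eq_cube power2_eq_square intro!: mult_left_mono mult_mono)
    hence "sqrt B \<le> sqrt ((2 * real d + 1) ^ 3 * A^2)" by (rule real_sqrt_le_mono)
    also have "\<dots> = sqrt ((2 * real d + 1) ^ 3) * A" by (simp add: real_sqrt_mult A0)
    finally show ?thesis .
  qed
  have ne: "{norm_l2 (conjM u x) | x. in_l2 x \<and> norm_l2 x \<le> 1} \<noteq> {}"
  proof -
    have "in_l2 (\<lambda>_. 0) \<and> norm_l2 (\<lambda>_. 0) \<le> 1" by (simp add: in_l2_def norm_l2_def)
    thus ?thesis by blast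
  qed
  show ?thesis unfolding opnorm_l2_def A_def[symmetric]
    by (rule cSup_least[OF ne]) (use main SB in force)
qed

end
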